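(* Let $n\ge1$ be an integer, $I,\Lambda$ non-empty sets and $P$ a $\Lambda\times I$ matrix with entries in $\mathbb{Z}_{n}\cup\{\mathbf{0}\}$. Let $A$ be a finite alphabet. Every language $L\subseteq A^{+}$ recognised by the Rees zero-matrix semigroup $M^{0}[\mathbb{Z}_{n};I,\Lambda;P]$ has generalised star-height at most $1$.
   Context: $\mathbb{Z}_n$ is the cyclic group of order $n$ written additively. For a group $G$, non-empty sets $I,\Lambda$ and a $\Lambda\times I$ matrix $P=(p_{\lambda i})$ with entries in $G\cup\{\mathbf{0}\}$ ($\mathbf{0}$ a new symbol), the Rees zero-matrix semigroup $M^{0}[G;I,\Lambda;P]$ is $(I\times G\times\Lambda)\cup\{\mathbf{0}\}$ with $(i,g,\lambda)(j,h,\mu)=(i,g\,p_{\lambda j}\,h,\mu)$ if $p_{\lambda j}\ne\mathbf{0}$, $=\mathbf{0}$ if $p_{\lambda j}=\mathbf{0}$, and $x\mathbf{0}=\mathbf{0}x=\mathbf{0}$. A language $L\subseteq A^{+}$ is recognised by a semigroup $T$ if there is a semigroup morphism $\psi:A^{+}\to T$ and a subset $X\subseteq T$ with $L=X\psi^{-1}$. Generalised regular expressions over $A$: $\emptyset$, $\varepsilon$ and each letter are expressions; if $E,F$ are expressions so are $E\cup F$, $EF$, $E^{\ast}$, $E^{c}$ (complement in $A^{\ast}$). Star-height: $h(\emptyset)=h(\varepsilon)=h(a)=0$, $h(E\cup F)=h(EF)=\max\{h(E),h(F)\}$, $h(E^{\ast})=h(E)+1$, $h(E^{c})=h(E)$;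 the star-height of a language is the minimum of $h(E)$ over expressions $E$ representing it. *)

theory Defs
  imports Main
begin

text \<open>Z_n is represented by {0..<n} with addition modulo n. The zero element
 of the Rees zero-matrix semigroup is None; (i,g,lambda) is Some (i,g,lambda).
 The sandwich matrix P is a function P lambda i, with None playing the role of the
 adjoined zero symbol.\<close>

type_synonym ('i,'l) rees0 = "('i \<times> nat \<times> 'l) option"

definition rees0_carrier :: "nat \<Rightarrow> 'i set \<Rightarrow> 'l set \<Rightarrow> ('i,'l) rees0 set" where
  "rees0_carrier n I \<Lambda> = {None} \<union> {Some (i, g, l) | i g l. i \<in> I \<and> g < n \<and> l \<in> \<Lambda>}"

definition rees0_mult :: "nat \<Rightarrow> ('l \<Rightarrow> 'i \<Rightarrow> nat option) \<Rightarrow> ('i,'l) rees0 \<Rightarrow> ('i,'l) rees0 \<Rightarrow> ('i,'l) rees0" where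
  "rees0_mult n P x y =
     (case x of None \<Rightarrow> None
      | Some (i, g, l) \<Rightarrow>
        (case y of None \<Rightarrow> None
         | Some (j, h, m) \<Rightarrow>
           (case P l j of None \<Rightarrow> None
            | Some p \<Rightarrow> Some (i, (g + p + h) mod n, m))))"

definition valid_sandwich :: "nat \<Rightarrow> 'i set \<Rightarrow> 'l set \<Rightarrow> ('l \<Rightarrow> 'i \<Rightarrow> nat option) \<Rightarrow> bool" where
  "valid_sandwich n I \<Lambda> P = (\<forall>l\<in>\<Lambda>. \<forall>i\<in>I. \<forall>p. P l i = Some p \<longrightarrow> p < n)"

definition plus_words :: "'a set \<Rightarrow> 'a list set" where
  "plus_words A = lists A - {[]}"

definition recognised_by :: "'a set \<Rightarrow> 's set \<Rightarrow> ('s \<Rightarrow> 's \<Rightarrow> 's) \<Rightarrow> 'a list set \<Rightarrow> bool" where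
  "recognised_by A S mult L =
     (\<exists>\<psi> X. (\<forall>w\<in>plus_words A. \<psi> w \<in> S)
          \<and> (\<forall>u\<in>plus_words A. \<forall>v\<in>plus_words A. \<psi> (u @ v) = mult (\<psi> u) (\<psi> v))
          \<and> X \<subseteq> S
          \<and> L = {w \<in> plus_words A. \<psi> w \<in> X})"

datatype 'a gre = GEmpty | GEps | GLet 'a | GUnion "'a gre" "'a gre"
  | GConc "'a gre" "'a gre" | GStar "'a gre" | GCompl "'a gre"

inductive_set kstar :: "'a list set \<Rightarrow> 'a list set" for L where
  kstar_nil: "[] \<in> kstar L"
| kstar_app: "u \<in> L \<Longrightarrow> v \<in> kstar L \<Longrightarrow> u @ v \<in> kstar L"

fun gre_over :: "'a set \<Rightarrow> 'a gre \<Rightarrow> bool" where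
  "gre_over A GEmpty = True"
| "gre_over A GEps = True"
| "gre_over A (GLet a) = (a \<in> A)"
| "gre_over A (GUnion E F) = (gre_over A E \<and> gre_over A F)"
| "gre_over A (GConc E F) = (gre_over A E \<and> gre_over A F)"
| "gre_over A (GStar E) = gre_over A E"
| "gre_over A (GCompl E) = gre_over A E"

text \<open>Semantics; complement is taken in A^*.\<close>
fun gre_lang :: "'a set \<Rightarrow> 'a gre \<Rightarrow> 'a list set" where
  "gre_lang A GEmpty = {}"
| "gre_lang A GEps = {[]}"
| "gre_lang A (GLet a) = {[a]}"
| "gre_lang A (GUnion E F) = gre_lang A E \<union> gre_lang A F"
| "gre_lang A (GConc E F) = {u @ v | u v. u \<in> gre_lang A E \<and> v \<in> gre_lang A F}"
| "gre_lang A (GStar E) = kstar (gre_lang A E)"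
| "gre_lang A (GCompl E) = lists A - gre_lang A E"

fun star_height :: "'a gre \<Rightarrow> nat" where
  "star_height GEmpty = 0"
| "star_height GEps = 0"
| "star_height (GLet a) = 0"
| "star_height (GUnion E F) = max (star_height E) (star_height F)"
| "star_height (GConc E F) = max (star_height E) (star_height F)"
| "star_height (GStar E) = star_height E + 1"
| "star_height (GCompl E) = star_height E"

definition gen_star_height_le :: "'a set \<Rightarrow> 'a list set \<Rightarrow> nat \<Rightarrow> bool" where
  "gen_star_height_le A L k = (\<exists>E. gre_over A E \<and> gre_lang A E = L \<and> star_height E \<le> k)"

end

theory Submission
  imports Defs
begin


definition shk :: "'a set \<Rightarrow> nat \<Rightarrow> 'a list set \<Rightarrow> bool" where
  "shk A k L = (\<exists>E. gre_over A E \<and> gre_lang A E = L \<and> star_height E \<le> k)"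

definition cc :: "'a list set \<Rightarrow> 'a list set \<Rightarrow> 'a list set" where
  "cc L M = {u @ v | u v. u \<in> L \<and> v \<in> M}"

lemma kstar_sub: "w \<in> kstar L \<Longrightarrow> L \<subseteq> lists A \<Longrightarrow> w \<in> lists A"
  by (induction rule: kstar.induct) auto

lemma gre_lang_sub: "gre_over A E \<Longrightarrow> gre_lang A E \<subseteq> lists A"
proof (induction E)
  case (GConc E1 E2)
  show ?case
  proof
    fix w assume "w \<in> gre_lang A (GConc E1 E2)"
    then obtain u v where uv: "w = u @ v" "u \<in> gre_lang A E1" "v \<in> gre_lang A E2" by auto
    have "u \<in> lists A" "v \<in> lists A" using GConc uv by auto
    then show "w \<in> lists A" using uv by simp
  qed
next
  case (GStar E) then show ?case using kstar_sub by (metis gre_lang.simps(6) gre_over.simps(6) subsetI)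
next
  case (GLet a) then show ?case by simp
next
  case (GUnion E F) then show ?case by simp
next
  case (GCompl E) then show ?case by auto
qed simp_all

lemma shk_sub: "shk A k L \<Longrightarrow> L \<subseteq> lists A"
  unfolding shk_def using gre_lang_sub by blast

lemma shk_mono: "shk A k L \<Longrightarrow> k \<le> k' \<Longrightarrow> shk A k' L"
  unfolding shk_def using le_trans by blast

lemma shk_empty: "shk A k {}"
  unfolding shk_def by (rule exI[of _ GEmpty]) auto

lemma shk_eps: "shk A k {[]}"
  unfolding shk_def by (rule exI[of _ GEps]) auto

lemma shk_letter: "a \<in> A \<Longrightarrow> shk A k {[a]}"
  unfolding shk_def by (rule exI[of _ "GLet a"]) auto

lemma shk_lists: "shk A k (lists A)"
  unfolding shk_def by (rule exI[of _ "GCompl GEmpty"]) auto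

lemma shk_union: assumes "shk A k L" "shk A k M" shows "shk A k (L \<union> M)"
proof -
  obtain E where E: "gre_over A E" "gre_lang A E = L" "star_height E \<le> k" using assms(1) unfolding shk_def by blast
  obtain F where F: "gre_over A F" "gre_lang A F = M" "star_height F \<le> k" using assms(2) unfolding shk_def by blast
  show ?thesis unfolding shk_def using E F by (intro exI[of _ "GUnion E F"]) (auto)
qed

lemma shk_cc: assumes "shk A k L" "shk A k M" shows "shk A k (cc L M)"
proof -
  obtain E where E: "gre_over A E" "gre_lang A E = L" "star_height E \<le> k" using assms(1) unfolding shk_def by blast
  obtain F where F: "gre_over A F" "gre_lang A F = M" "star_height F \<le> k" using assms(2) unfolding shk_def by blast
  show ?thesis unfolding shk_def using E F by (intro exI[of _ "GConc E F"]) (auto simp: cc_def)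
qed

lemma shk_compl: assumes "shk A k L" shows "shk A k (lists A - L)"
proof -
  obtain E where E: "gre_over A E" "gre_lang A E = L" "star_height E \<le> k" using assms(1) unfolding shk_def by blast
  show ?thesis unfolding shk_def using E by (intro exI[of _ "GCompl E"]) (auto)
qed

lemma shk_star: assumes "shk A k L" shows "shk A (Suc k) (kstar L)"
proof -
  obtain E where E: "gre_over A E" "gre_lang A E = L" "star_height E \<le> k" using assms(1) unfolding shk_def by blast
  show ?thesis unfolding shk_def using E by (intro exI[of _ "GStar E"]) (auto)
qed

lemma shk_inter: "shk A k L \<Longrightarrow> shk A k M \<Longrightarrow> shk A k (L \<inter> M)"
proof -
  assume a: "shk A k L" "shk A k M"
  have "L \<inter> M = lists A - ((lists A - L) \<union> (lists A - M))"
    using shk_sub[OF a(1)] shk_sub[OF a(2)] by blast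
  then show ?thesis using a by (simp add: shk_compl shk_union)
qed

lemma shk_diff: "shk A k L \<Longrightarrow> shk A k M \<Longrightarrow> shk A k (L - M)"
proof -
  assume a: "shk A k L" "shk A k M"
  have "L - M = L \<inter> (lists A - M)"
    using shk_sub[OF a(1)] by blast
  then show ?thesis using a by (simp add: shk_compl shk_inter)
qed

lemma shk_UN: "finite S \<Longrightarrow> (\<And>s. s \<in> S \<Longrightarrow> shk A k (F s)) \<Longrightarrow> shk A k (\<Union>s\<in>S. F s)"
  by (induction S rule: finite_induct) (auto intro: shk_empty shk_union)

lemma shk_plus: "shk A k (lists A - {[]})"
  by (simp add: shk_diff shk_lists shk_eps)

fun powl :: "'a list set \<Rightarrow> nat \<Rightarrow> 'a list set" where
  "powl D 0 = {[]}"
| "powl D (Suc k) = cc D (powl D k)"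

lemma shk_powl: "shk A k D \<Longrightarrow> shk A k (powl D m)"
  by (induction m) (auto intro: shk_eps shk_cc)

lemma cc_assoc: "cc (cc L M) N = cc L (cc M N)"
proof (rule set_eqI)
  fix w show "w \<in> cc (cc L M) N \<longleftrightarrow> w \<in> cc L (cc M N)"
  proof
    assume "w \<in> cc (cc L M) N"
    then obtain u v x where h: "u \<in> L" "v \<in> M" "x \<in> N" "w = (u @ v) @ x" unfolding cc_def by blast
    then have "v @ x \<in> cc M N" unfolding cc_def by blast
    then show "w \<in> cc L (cc M N)" using h unfolding cc_def mem_Collect_eq
      by (intro exI[of _ u] exI[of _ "v @ x"]) simp
  next
    assume "w \<in> cc L (cc M N)"
    then obtain u v x where h: "u \<in> L" "v \<in> M" "x \<in> N" "w = u @ (v @ x)" unfolding cc_def by blast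
    then have "u @ v \<in> cc L M" unfolding cc_def by blast
    then show "w \<in> cc (cc L M) N" using h unfolding cc_def mem_Collect_eq
      by (intro exI[of _ "u @ v"] exI[of _ x]) simp
  qed
qed

lemma powl_add: "powl D (a + b) = cc (powl D a) (powl D b)"
proof (induction a)
  case 0 then show ?case by (auto simp: cc_def)
next
  case (Suc a) then show ?case by (simp add: cc_assoc)
qed

lemma powl_mult_kstar: "powl D (q * n) \<subseteq> kstar (powl D n)"
proof (induction q)
  case 0 then show ?case by (simp add: kstar_nil)
next
  case (Suc q)
  have "powl D (Suc q * n) = cc (powl D n) (powl D (q * n))"
    by (simp add: powl_add)
  show ?case
  proof
    fix w assume "w \<in> powl D (Suc q * n)"
    then obtain u v where "u \<in> powl D n" "v \<in> powl D (q * n)" "w = u @ v"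
      unfolding \<open>powl D (Suc q * n) = _\<close> cc_def by blast
    then show "w \<in> kstar (powl D n)" using Suc by (auto intro: kstar_app)
  qed
qed



lemma count_lemma:
  fixes cnt :: "'a list \<Rightarrow> nat" and G D :: "'a list set"
  assumes G0: "[] \<in> G" and Gapp: "\<And>u v. u \<in> G \<Longrightarrow> v \<in> G \<Longrightarrow> u @ v \<in> G"
    and cadd: "\<And>u v. u \<in> G \<Longrightarrow> cnt (u @ v) = cnt u + cnt v"
    and cnil: "cnt [] = 0"
    and DG: "\<And>d. d \<in> D \<Longrightarrow> d \<in> G \<and> cnt d = 1 \<and> d \<in> lists A"
    and split: "\<And>w. w \<in> lists A \<Longrightarrow> cnt w > 0 \<Longrightarrow> \<exists>d y. d \<in> D \<and> y \<in> lists A \<and> w = d @ y"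
    and m: "m < n"
  shows "{w \<in> lists A. cnt w mod n = m} = cc (kstar (powl D n)) (cc (powl D m) {w \<in> lists A. cnt w = 0})"
proof -
  let ?E = "{w \<in> lists A. cnt w = 0}"
  have pp: "w \<in> G \<and> cnt w = k \<and> w \<in> lists A" if "w \<in> powl D k" for w k
    using that
  proof (induction k arbitrary: w)
    case 0 then show ?case using G0 cnil by simp
  next
    case (Suc k)
    then obtain u v where uv: "u \<in> D" "v \<in> powl D k" "w = u @ v" by (auto simp: cc_def)
    then show ?case using Suc.IH[OF uv(2)] DG[OF uv(1)] Gapp cadd by auto
  qed
  have kp: "w \<in> G \<and> cnt w mod n = 0 \<and> w \<in> lists A" if "w \<in> kstar (powl D n)" for w
    using that
  proof (induction rule: kstar.induct)
    case kstar_nil then show ?case using G0 cnil by simp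
  next
    case (kstar_app u v)
    have "u \<in> G" "cnt u = n" "u \<in> lists A" using pp[OF kstar_app(1)] by auto
    then show ?case using kstar_app(3) Gapp cadd by auto
  qed
  have dec: "\<forall>w. cnt w = c \<longrightarrow> w \<in> lists A \<longrightarrow> w \<in> cc (powl D c) ?E" for c
  proof (induction c)
    case 0 then show ?case by (auto simp: cc_def)
  next
    case (Suc c)
    show ?case
    proof (intro allI impI)
      fix w assume w: "cnt w = Suc c" "w \<in> lists A"
      then obtain d y where dy: "d \<in> D" "y \<in> lists A" "w = d @ y" using split by fastforce
      have "cnt w = 1 + cnt y" using dy DG cadd by auto
      then have "y \<in> cc (powl D c) ?E" using Suc dy w by auto
      then obtain y1 y2 where "y1 \<in> powl D c" "y2 \<in> ?E" "y = y1 @ y2" unfolding cc_def by blast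
      moreover have "d @ y1 \<in> cc D (powl D c)" using dy \<open>y1 \<in> powl D c\<close> unfolding cc_def by blast
      then have "d @ y1 \<in> powl D (Suc c)" by simp
      ultimately show "w \<in> cc (powl D (Suc c)) ?E" using dy unfolding cc_def mem_Collect_eq
        by (intro exI[of _ "d @ y1"] exI[of _ y2]) simp
    qed
  qed
  show ?thesis
  proof
    show "{w \<in> lists A. cnt w mod n = m} \<subseteq> cc (kstar (powl D n)) (cc (powl D m) ?E)"
    proof
      fix w assume w: "w \<in> {w \<in> lists A. cnt w mod n = m}"
      define q where "q = cnt w div n"
      have c: "cnt w = q * n + m" using w q_def by auto
      have "w \<in> cc (powl D (q * n + m)) ?E" using dec w c by auto
      then have "w \<in> cc (cc (powl D (q * n)) (powl D m)) ?E" by (simp add: powl_add)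
      then have "w \<in> cc (powl D (q * n)) (cc (powl D m) ?E)" by (simp add: cc_assoc)
      then show "w \<in> cc (kstar (powl D n)) (cc (powl D m) ?E)"
        using powl_mult_kstar[of D q n] unfolding cc_def by blast
    qed
  next
    show "cc (kstar (powl D n)) (cc (powl D m) ?E) \<subseteq> {w \<in> lists A. cnt w mod n = m}"
    proof
      fix w assume "w \<in> cc (kstar (powl D n)) (cc (powl D m) ?E)"
      then obtain u v e where h: "u \<in> kstar (powl D n)" "v \<in> powl D m" "e \<in> ?E" "w = u @ v @ e"
        unfolding cc_def by blast
      have "cnt w = cnt u + (cnt v + cnt e)" using h kp[OF h(1)] pp[OF h(2)] cadd by simp
      then have "cnt w mod n = m" using h kp[OF h(1)] pp[OF h(2)] m by (simp add: mod_add_left_eq[symmetric]) 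
      then show "w \<in> {w \<in> lists A. cnt w mod n = m}" using h kp[OF h(1)] pp[OF h(2)] by simp
    qed
  qed
qed



definition good :: "'a set \<Rightarrow> nat \<Rightarrow> ('a list \<Rightarrow> int) \<Rightarrow> bool" where
  "good A n f = (\<forall>m. shk A 1 {w \<in> lists A. f w mod int n = m})"

lemma count_good:
  fixes cnt :: "'a list \<Rightarrow> nat" and G D :: "'a list set"
  assumes G0: "[] \<in> G" and Gapp: "\<And>u v. u \<in> G \<Longrightarrow> v \<in> G \<Longrightarrow> u @ v \<in> G"
    and cadd: "\<And>u v. u \<in> G \<Longrightarrow> cnt (u @ v) = cnt u + cnt v"
    and cnil: "cnt [] = 0"
    and DG: "\<And>d. d \<in> D \<Longrightarrow> d \<in> G \<and> cnt d = 1 \<and> d \<in> lists A"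
    and split: "\<And>w. w \<in> lists A \<Longrightarrow> cnt w > 0 \<Longrightarrow> \<exists>d y. d \<in> D \<and> y \<in> lists A \<and> w = d @ y"
    and n: "n \<ge> 1"
    and shD: "shk A 0 D" and shE: "shk A 0 {w \<in> lists A. cnt w = 0}"
  shows "good A n (\<lambda>w. int (cnt w))"
  unfolding good_def
proof
  fix m :: int
  show "shk A 1 {w \<in> lists A. int (cnt w) mod int n = m}"
  proof (cases "0 \<le> m \<and> m < int n")
    case True
    have "{w \<in> lists A. int (cnt w) mod int n = m} = {w \<in> lists A. cnt w mod n = nat m}"
    proof (rule Collect_cong)
      fix w
      have "int (cnt w) mod int n = int (cnt w mod n)" by (simp add: of_nat_mod)
      then show "(w \<in> lists A \<and> int (cnt w) mod int n = m) = (w \<in> lists A \<and> cnt w mod n = nat m)"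
        using True by auto
    qed
    also have "\<dots> = cc (kstar (powl D n)) (cc (powl D (nat m)) {w \<in> lists A. cnt w = 0})"
      by (rule count_lemma[OF G0 Gapp cadd cnil DG split]) (use True in auto)
    finally have eq: "{w \<in> lists A. int (cnt w) mod int n = m} = cc (kstar (powl D n)) (cc (powl D (nat m)) {w \<in> lists A. cnt w = 0})" .
    have s1: "shk A 1 (kstar (powl D n))" using shk_star[OF shk_powl[OF shD]] by simp
    have s2: "shk A 1 (powl D (nat m))" by (rule shk_mono[OF shk_powl[OF shD]]) simp
    have s3: "shk A 1 {w \<in> lists A. cnt w = 0}" by (rule shk_mono[OF shE]) simp
    show ?thesis unfolding eq using s1 s2 s3 by (intro shk_cc)
  next
    case False
    have "int (cnt w) mod int n \<noteq> m" for w
    proof -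
      have "0 \<le> int (cnt w) mod int n" "int (cnt w) mod int n < int n" using n by simp_all
      then show ?thesis using False by auto
    qed
    then have e0: "{w \<in> lists A. int (cnt w) mod int n = m} = {}" by blast
    show ?thesis unfolding e0 by (rule shk_empty)
  qed
qed

fun cnt1 :: "'a \<Rightarrow> 'a list \<Rightarrow> nat" where
  "cnt1 a [] = 0"
| "cnt1 a (x # xs) = (if x = a then 1 else 0) + cnt1 a xs"

lemma cnt1_append[simp]: "cnt1 a (u @ v) = cnt1 a u + cnt1 a v"
  by (induction u) auto

lemma cnt1_zero: "cnt1 a w = 0 \<longleftrightarrow> a \<notin> set w"
  by (induction w) auto

lemma mem_cc3: "w \<in> cc (cc (lists A) {p}) (lists A) \<longleftrightarrow> (\<exists>x y. x \<in> lists A \<and> y \<in> lists A \<and> w = x @ p @ y)"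
proof
  assume "w \<in> cc (cc (lists A) {p}) (lists A)"
  then show "\<exists>x y. x \<in> lists A \<and> y \<in> lists A \<and> w = x @ p @ y" unfolding cc_def by auto
next
  assume "\<exists>x y. x \<in> lists A \<and> y \<in> lists A \<and> w = x @ p @ y"
  then obtain x y where h: "x \<in> lists A" "y \<in> lists A" "w = x @ p @ y" by blast
  have "x @ p \<in> cc (lists A) {p}" using h(1) unfolding cc_def by blast
  then show "w \<in> cc (cc (lists A) {p}) (lists A)" using h unfolding cc_def mem_Collect_eq
    by (intro exI[of _ "x @ p"] exI[of _ y]) simp
qed

lemma good_cnt1:
  assumes "a \<in> A" "n \<ge> 1"
  shows "good A n (\<lambda>w. int (cnt1 a w))"
proof -
  let ?E = "{w \<in> lists A. cnt1 a w = 0}"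
  have E: "?E = lists A - cc (cc (lists A) {[a]}) (lists A)"
  proof (rule set_eqI)
    fix w
    show "w \<in> ?E \<longleftrightarrow> w \<in> lists A - cc (cc (lists A) {[a]}) (lists A)"
      unfolding Diff_iff mem_cc3 mem_Collect_eq cnt1_zero in_set_conv_decomp
    proof (intro iffI conjI)
      assume h: "w \<in> lists A \<and> \<not> (\<exists>ys zs. w = ys @ a # zs)"
      then show "w \<in> lists A" by simp
      show "\<not> (\<exists>x y. x \<in> lists A \<and> y \<in> lists A \<and> w = x @ [a] @ y)" using h by auto
    next
      assume h: "w \<in> lists A \<and> \<not> (\<exists>x y. x \<in> lists A \<and> y \<in> lists A \<and> w = x @ [a] @ y)"
      then show "w \<in> lists A" by simp
      show "\<not> (\<exists>ys zs. w = ys @ a # zs)"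
      proof
        assume "\<exists>ys zs. w = ys @ a # zs"
        then obtain ys zs where e: "w = ys @ a # zs" by blast
        then have "ys \<in> lists A" "zs \<in> lists A" using h by auto
        then show False using h e by auto
      qed
    qed
  qed
  have shE: "shk A 0 ?E" unfolding E
    using assms by (intro shk_compl shk_cc shk_lists shk_letter)
  show ?thesis
  proof (rule count_good[where G=UNIV and D="cc ?E {[a]}"])
    show "shk A 0 (cc ?E {[a]})" using shE assms by (intro shk_cc shk_letter)
  next
    fix d assume "d \<in> cc ?E {[a]}"
    then show "d \<in> UNIV \<and> cnt1 a d = 1 \<and> d \<in> lists A" using assms by (auto simp: cc_def)
  next
    fix w assume w: "w \<in> lists A" "0 < cnt1 a w"
    then have "a \<in> set w" using cnt1_zero[of a w] by linarith
    then obtain x y where xy: "w = x @ a # y" "a \<notin> set x" by (metis split_list_first)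
    have "cnt1 a x = 0" using xy(2) cnt1_zero by metis
    moreover have "x \<in> lists A" using xy w by simp
    ultimately have "x \<in> ?E" by simp
    then have "x @ [a] \<in> cc ?E {[a]}" unfolding cc_def by blast
    then show "\<exists>d y. d \<in> cc ?E {[a]} \<and> y \<in> lists A \<and> w = d @ y"
      using xy w by (intro exI[of _ "x @ [a]"] exI[of _ y]) auto
  qed (use shE assms in auto)
qed

fun cnt2 :: "'a \<Rightarrow> 'a \<Rightarrow> 'a list \<Rightarrow> nat" where
  "cnt2 a b (x # y # ys) = (if x = a \<and> y = b then 1 else 0) + cnt2 a b (y # ys)"
| "cnt2 a b _ = 0"

lemma cnt2_append:
  "cnt2 a b (u @ v) = cnt2 a b u + cnt2 a b v + (if u \<noteq> [] \<and> v \<noteq> [] \<and> last u = a \<and> hd v = b then 1 else 0)"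
proof (induction u)
  case Nil then show ?case by simp
next
  case (Cons x u)
  show ?case
  proof (cases u)
    case Nil then show ?thesis by (cases v) auto
  next
    case (Cons y us) then show ?thesis using Cons.IH by auto
  qed
qed

lemma cnt2_first:
  "cnt2 a b w > 0 \<Longrightarrow> \<exists>x y. w = x @ [a, b] @ y \<and> cnt2 a b x = 0"
proof (induction a b w rule: cnt2.induct)
  case (1 a b x y ys)
  show ?case
  proof (cases "x = a \<and> y = b")
    case True then show ?thesis by (intro exI[of _ "[]"] exI[of _ ys]) auto
  next
    case False
    then have "cnt2 a b (y # ys) > 0" using "1.prems" by (auto split: if_split_asm)
    then obtain e r where er: "y # ys = e @ [a, b] @ r" "cnt2 a b e = 0" using "1.IH" by blast
    have "cnt2 a b (x # e) = 0"
    proof (cases e)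
      case Nil then show ?thesis by simp
    next
      case (Cons z zs)
      then have "z = y" using er by simp
      then show ?thesis using er Cons False by simp
    qed
    then show ?thesis using er by (intro exI[of _ "x # e"] exI[of _ r]) simp
  qed
qed auto

lemma cnt2_zero: "a \<noteq> b \<Longrightarrow> cnt2 a b w = 0 \<longleftrightarrow> \<not> (\<exists>x y. w = x @ [a, b] @ y)"
proof
  assume "a \<noteq> b" "cnt2 a b w = 0"
  then show "\<not> (\<exists>x y. w = x @ [a, b] @ y)"
    using cnt2_append[of a b _ "[a, b] @ _"] by (auto simp: cnt2_append)
next
  assume "\<not> (\<exists>x y. w = x @ [a, b] @ y)"
  then show "cnt2 a b w = 0" using cnt2_first by (metis gr0I)
qed



lemma cnt2_E:
  assumes "a \<noteq> b"
  shows "{w \<in> lists A. cnt2 a b w = 0} = lists A - cc (cc (lists A) {[a, b]}) (lists A)"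
proof (rule set_eqI)
  fix w
  show "w \<in> {w \<in> lists A. cnt2 a b w = 0} \<longleftrightarrow> w \<in> lists A - cc (cc (lists A) {[a, b]}) (lists A)"
    unfolding Diff_iff mem_cc3 mem_Collect_eq cnt2_zero[OF assms]
  proof (intro iffI conjI)
    assume h: "w \<in> lists A \<and> \<not> (\<exists>x y. w = x @ [a, b] @ y)"
    then show "w \<in> lists A" by simp
    show "\<not> (\<exists>x y. x \<in> lists A \<and> y \<in> lists A \<and> w = x @ [a, b] @ y)" using h by blast
  next
    assume h: "w \<in> lists A \<and> \<not> (\<exists>x y. x \<in> lists A \<and> y \<in> lists A \<and> w = x @ [a, b] @ y)"
    then show "w \<in> lists A" by simp
    show "\<not> (\<exists>x y. w = x @ [a, b] @ y)"
    proof
      assume "\<exists>x y. w = x @ [a, b] @ y"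
      then obtain x y where e: "w = x @ [a, b] @ y" by blast
      then have "x \<in> lists A" "y \<in> lists A" using h by auto
      then show False using h e by blast
    qed
  qed
qed


lemma cnt2_G_add:
  assumes "u = [] \<or> last u \<noteq> a"
  shows "cnt2 a b (u @ v) = cnt2 a b u + cnt2 a b v"
proof -
  have "\<not> (u \<noteq> [] \<and> v \<noteq> [] \<and> last u = a \<and> hd v = b)" using assms by blast
  then show ?thesis using cnt2_append[of a b u v] by presburger
qed

lemma cnt2_D:
  assumes "a \<noteq> b" "a \<in> A" "b \<in> A" "d \<in> cc {w \<in> lists A. cnt2 a b w = 0} {[a, b]}"
  shows "(d = [] \<or> last d \<noteq> a) \<and> cnt2 a b d = 1 \<and> d \<in> lists A"
proof -
  obtain e where e: "e \<in> lists A" "cnt2 a b e = 0" "d = e @ [a, b]" using assms(4) unfolding cc_def by blast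
  have "cnt2 a b d = cnt2 a b e + cnt2 a b [a, b] + 0" unfolding e(3) cnt2_append using assms(1) by simp
  then have "cnt2 a b d = 1" using e by simp
  moreover have "last d \<noteq> a" using e assms(1) by simp
  moreover have "d \<in> lists A" using e assms by simp
  ultimately show ?thesis by simp
qed


lemma shk_pair: "a \<in> A \<Longrightarrow> b \<in> A \<Longrightarrow> shk A k {[a, b]}"
proof -
  assume "a \<in> A" "b \<in> A"
  have ab: "{[a, b]} = cc {[a]} {[b]}" unfolding cc_def by simp
  show ?thesis unfolding ab using \<open>a \<in> A\<close> \<open>b \<in> A\<close> by (intro shk_cc shk_letter)
qed
lemma good_cnt2:
  assumes "a \<in> A" "b \<in> A" "a \<noteq> b" "n \<ge> 1"
  shows "good A n (\<lambda>w. int (cnt2 a b w))"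
proof -
  let ?E = "{w \<in> lists A. cnt2 a b w = 0}"
  have shab: "shk A 0 {[a, b]}" using assms by (intro shk_pair)
  have shE: "shk A 0 ?E" unfolding cnt2_E[OF assms(3)]
    using assms shab by (intro shk_compl shk_cc shk_lists)
  let ?G = "{u. u = [] \<or> last u \<noteq> a}"
  show ?thesis
  proof (rule count_good[where G="?G" and D="cc ?E {[a, b]}"])
    show "shk A 0 (cc ?E {[a, b]})" using shE shab by (intro shk_cc)
  next
    fix u v assume uv: "u \<in> ?G" "v \<in> ?G"
    show "u @ v \<in> ?G"
    proof (cases "v = []")
      case True then show ?thesis using uv(1) by simp
    next
      case False
      then have "last (u @ v) = last v" by simp
      then show ?thesis using uv(2) False by simp
    qed
  next
    fix u v assume "u \<in> ?G"
    then have "u = [] \<or> last u \<noteq> a" by simp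
    then show "cnt2 a b (u @ v) = cnt2 a b u + cnt2 a b v" by (rule cnt2_G_add)
  next
    fix d assume d: "d \<in> cc ?E {[a, b]}"
    show "d \<in> ?G \<and> cnt2 a b d = 1 \<and> d \<in> lists A" using cnt2_D[OF assms(3,1,2) d] by simp
  next
    fix w assume w: "w \<in> lists A" "0 < cnt2 a b w"
    obtain x y where xy: "w = x @ [a, b] @ y" "cnt2 a b x = 0" using cnt2_first[OF w(2)] by blast
    have "x \<in> ?E" using xy w by simp
    then have d: "x @ [a, b] \<in> cc ?E {[a, b]}" unfolding cc_def by blast
    have y: "y \<in> lists A" using xy w by simp
    have "w = (x @ [a, b]) @ y" using xy by simp
    then show "\<exists>d y. d \<in> cc ?E {[a, b]} \<and> y \<in> lists A \<and> w = d @ y"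
      using d y by blast
  next
    show "[] \<in> ?G" by simp
  next
    show "cnt2 a b [] = 0" by simp
  next
    show "1 \<le> n" using assms(4) .
  next
    show "shk A 0 ?E" using shE .
  qed
qed



lemma good_intro:
  assumes n: "n \<ge> 1" and h: "\<And>m. 0 \<le> m \<Longrightarrow> m < int n \<Longrightarrow> shk A 1 {w \<in> lists A. f w mod int n = m}"
  shows "good A n f"
  unfolding good_def
proof
  fix m :: int
  show "shk A 1 {w \<in> lists A. f w mod int n = m}"
  proof (cases "0 \<le> m \<and> m < int n")
    case True then show ?thesis using h by blast
  next
    case False
    have "f w mod int n \<noteq> m" for w
    proof -
      have "0 \<le> f w mod int n" "f w mod int n < int n" using n by simp_all
      then show ?thesis using False by auto
    qed
    then have e0: "{w \<in> lists A. f w mod int n = m} = {}" by blast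
    show ?thesis unfolding e0 by (rule shk_empty)
  qed
qed

lemma good_cong:
  assumes "\<And>w. w \<in> lists A \<Longrightarrow> f w = g w" "good A n f"
  shows "good A n g"
  unfolding good_def
proof
  fix m
  have "{w \<in> lists A. g w mod int n = m} = {w \<in> lists A. f w mod int n = m}"
    using assms(1) by (metis (no_types, lifting))
  then show "shk A 1 {w \<in> lists A. g w mod int n = m}" using assms(2) unfolding good_def by simp
qed

lemma good_const: "good A n (\<lambda>w. c)"
  unfolding good_def
proof
  fix m
  show "shk A 1 {w \<in> lists A. c mod int n = m}"
  proof (cases "c mod int n = m")
    case True
    then have "{w \<in> lists A. c mod int n = m} = lists A" by simp
    then show ?thesis by (simp add: shk_lists)
  next
    case False
    then have e: "{w \<in> lists A. c mod int n = m} = {}" by simp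
    show ?thesis unfolding e by (rule shk_empty)
  qed
qed

lemma good_add:
  assumes n: "n \<ge> 1" and f: "good A n f" and g: "good A n g"
  shows "good A n (\<lambda>w. f w + g w)"
proof (rule good_intro[OF n])
  fix m :: int assume m: "0 \<le> m" "m < int n"
  let ?N = "int n"
  have eq: "{w \<in> lists A. (f w + g w) mod ?N = m} =
    (\<Union>j\<in>{0..<?N}. {w \<in> lists A. f w mod ?N = j} \<inter> {w \<in> lists A. g w mod ?N = (m - j) mod ?N})"
  proof (rule set_eqI)
    fix w
    show "w \<in> {w \<in> lists A. (f w + g w) mod ?N = m} \<longleftrightarrow>
      w \<in> (\<Union>j\<in>{0..<?N}. {w \<in> lists A. f w mod ?N = j} \<inter> {w \<in> lists A. g w mod ?N = (m - j) mod ?N})"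
    proof
      assume h: "w \<in> {w \<in> lists A. (f w + g w) mod ?N = m}"
      let ?j = "f w mod ?N"
      have j: "?j \<in> {0..<?N}" using n by simp
      have "(m - ?j) mod ?N = ((f w + g w) mod ?N - f w mod ?N) mod ?N" using h by simp
      also have "\<dots> = (f w + g w - f w) mod ?N" by (rule mod_diff_eq)
      also have "\<dots> = g w mod ?N" by simp
      finally show "w \<in> (\<Union>j\<in>{0..<?N}. {w \<in> lists A. f w mod ?N = j} \<inter> {w \<in> lists A. g w mod ?N = (m - j) mod ?N})"
        using h j by auto
    next
      assume "w \<in> (\<Union>j\<in>{0..<?N}. {w \<in> lists A. f w mod ?N = j} \<inter> {w \<in> lists A. g w mod ?N = (m - j) mod ?N})"
      then obtain j where h: "w \<in> lists A" "f w mod ?N = j" "g w mod ?N = (m - j) mod ?N" by blast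
      have "(f w + g w) mod ?N = (f w mod ?N + g w mod ?N) mod ?N" by (rule mod_add_eq[symmetric])
      also have "\<dots> = (j + (m - j) mod ?N) mod ?N" using h by simp
      also have "\<dots> = (j + (m - j)) mod ?N" by (rule mod_add_right_eq)
      also have "\<dots> = m" using m by simp
      finally show "w \<in> {w \<in> lists A. (f w + g w) mod ?N = m}" using h by simp
    qed
  qed
  show "shk A 1 {w \<in> lists A. (f w + g w) mod ?N = m}" unfolding eq
    using f g unfolding good_def by (intro shk_UN shk_inter) auto
qed

lemma good_scale:
  assumes n: "n \<ge> 1" and f: "good A n f"
  shows "good A n (\<lambda>w. c * f w)"
proof (rule good_intro[OF n])
  fix m :: int assume m: "0 \<le> m" "m < int n"
  let ?N = "int n"
  have eq: "{w \<in> lists A. (c * f w) mod ?N = m} =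
    (\<Union>j\<in>{j \<in> {0..<?N}. (c * j) mod ?N = m}. {w \<in> lists A. f w mod ?N = j})"
  proof (rule set_eqI)
    fix w
    have key: "(c * f w) mod ?N = (c * (f w mod ?N)) mod ?N" by (rule mod_mult_right_eq[symmetric])
    have j: "f w mod ?N \<in> {0..<?N}" using n by simp
    show "w \<in> {w \<in> lists A. (c * f w) mod ?N = m} \<longleftrightarrow>
      w \<in> (\<Union>j\<in>{j \<in> {0..<?N}. (c * j) mod ?N = m}. {w \<in> lists A. f w mod ?N = j})"
      using key j by auto
  qed
  have fin: "finite {j \<in> {0..<?N}. (c * j) mod ?N = m}" by (rule finite_subset[of _ "{0..<?N}"]) auto
  show "shk A 1 {w \<in> lists A. (c * f w) mod ?N = m}" unfolding eq
    using f fin unfolding good_def by (intro shk_UN) auto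
qed

lemma good_sum:
  assumes n: "n \<ge> 1" and fin: "finite S" and h: "\<And>s. s \<in> S \<Longrightarrow> good A n (F s)"
  shows "good A n (\<lambda>w. \<Sum>s\<in>S. F s w)"
  using fin h
proof (induction S rule: finite_induct)
  case empty then show ?case by (simp add: good_const)
next
  case (insert x S)
  have "good A n (\<lambda>w. F x w + (\<Sum>s\<in>S. F s w))"
    using insert by (intro good_add[OF n]) auto
  then show ?case using insert by simp
qed

lemma good_ind:
  assumes L: "shk A 1 L"
  shows "good A n (\<lambda>w. if w \<in> L then 1 else 0)"
  unfolding good_def
proof
  fix m :: int
  have sub: "L \<subseteq> lists A" using shk_sub[OF L] .
  have eq: "{w \<in> lists A. (if w \<in> L then 1 else 0) mod int n = m} =
     (if 1 mod int n = m then L else {}) \<union> (if 0 mod int n = m then lists A - L else {})"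
    using sub by auto
  show "shk A 1 {w \<in> lists A. (if w \<in> L then 1 else 0) mod int n = m}"
    unfolding eq using L by (intro shk_union) (auto simp: shk_empty shk_compl)
qed



definition iA :: "('a list \<Rightarrow> ('i,'l) rees0) \<Rightarrow> 'a \<Rightarrow> 'i" where
  "iA \<psi> x = fst (the (\<psi> [x]))"
definition gA :: "('a list \<Rightarrow> ('i,'l) rees0) \<Rightarrow> 'a \<Rightarrow> nat" where
  "gA \<psi> x = fst (snd (the (\<psi> [x])))"
definition lA :: "('a list \<Rightarrow> ('i,'l) rees0) \<Rightarrow> 'a \<Rightarrow> 'l" where
  "lA \<psi> x = snd (snd (the (\<psi> [x])))"
definition pA :: "('a list \<Rightarrow> ('i,'l) rees0) \<Rightarrow> ('l \<Rightarrow> 'i \<Rightarrow> nat option) \<Rightarrow> 'a \<Rightarrow> 'a \<Rightarrow> nat" where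
  "pA \<psi> P x y = the (P (lA \<psi> x) (iA \<psi> y))"

fun adm :: "('a list \<Rightarrow> ('i,'l) rees0) \<Rightarrow> ('l \<Rightarrow> 'i \<Rightarrow> nat option) \<Rightarrow> 'a list \<Rightarrow> bool" where
  "adm \<psi> P [] = False"
| "adm \<psi> P [x] = (\<psi> [x] \<noteq> None)"
| "adm \<psi> P (x # y # ys) = (\<psi> [x] \<noteq> None \<and> P (lA \<psi> x) (iA \<psi> y) \<noteq> None \<and> adm \<psi> P (y # ys))"

fun wtn :: "('a list \<Rightarrow> ('i,'l) rees0) \<Rightarrow> ('l \<Rightarrow> 'i \<Rightarrow> nat option) \<Rightarrow> 'a list \<Rightarrow> nat" where
  "wtn \<psi> P [] = 0"
| "wtn \<psi> P [x] = gA \<psi> x"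
| "wtn \<psi> P (x # y # ys) = gA \<psi> x + pA \<psi> P x y + wtn \<psi> P (y # ys)"

lemma psi_char:
  assumes S: "\<And>w. w \<in> plus_words A \<Longrightarrow> \<psi> w \<in> rees0_carrier n I \<Lambda>"
    and M: "\<And>u v. u \<in> plus_words A \<Longrightarrow> v \<in> plus_words A \<Longrightarrow> \<psi> (u @ v) = rees0_mult n P (\<psi> u) (\<psi> v)"
  shows "w \<in> plus_words A \<Longrightarrow> \<psi> w = (if adm \<psi> P w then Some (iA \<psi> (hd w), wtn \<psi> P w mod n, lA \<psi> (last w)) else None)"
proof (induction w)
  case Nil then show ?case by (simp add: plus_words_def)
next
  case (Cons x w)
  have xA: "x \<in> A" and wA: "w \<in> lists A" using Cons.prems by (auto simp: plus_words_def)
  have px: "[x] \<in> plus_words A" using xA by (simp add: plus_words_def)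
  have cx: "\<psi> [x] = None \<or> (\<exists>i g l. \<psi> [x] = Some (i, g, l) \<and> g < n)"
    using S[OF px] unfolding rees0_carrier_def by auto
  show ?case
  proof (cases w)
    case Nil
    show ?thesis
    proof (cases "\<psi> [x]")
      case None then show ?thesis using Nil by simp
    next
      case (Some t)
      then obtain i g l where t: "\<psi> [x] = Some (i, g, l)" "g < n" using cx by auto
      then show ?thesis using Nil by (simp add: iA_def gA_def lA_def)
    qed
  next
    case (Cons y ys)
    have pw: "w \<in> plus_words A" using wA Cons by (simp add: plus_words_def)
    have IH: "\<psi> w = (if adm \<psi> P w then Some (iA \<psi> (hd w), wtn \<psi> P w mod n, lA \<psi> (last w)) else None)"
      using Cons.IH[OF pw] .
    have split: "\<psi> (x # w) = rees0_mult n P (\<psi> [x]) (\<psi> w)" using M[OF px pw] by simp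
    show ?thesis
    proof (cases "\<psi> [x]")
      case None then show ?thesis using split Cons by (simp add: rees0_mult_def)
    next
      case (Some t)
      then obtain i g l where t: "\<psi> [x] = Some (i, g, l)" "g < n" using cx by auto
      show ?thesis
      proof (cases "adm \<psi> P w")
        case False
        then show ?thesis using split IH Cons t by (simp add: rees0_mult_def)
      next
        case True
        show ?thesis
        proof (cases "P l (iA \<psi> y)")
          case None
          then show ?thesis using split IH Cons t True by (simp add: rees0_mult_def lA_def)
        next
          case (Some p)
          have "\<psi> (x # w) = Some (i, (g + p + wtn \<psi> P w mod n) mod n, lA \<psi> (last w))"
            using split IH Cons t True Some by (simp add: rees0_mult_def)
          also have "(g + p + wtn \<psi> P w mod n) mod n = (g + p + wtn \<psi> P w) mod n"
            by (simp add: mod_add_right_eq)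
          finally show ?thesis using Cons t True Some
            by (simp add: iA_def gA_def lA_def pA_def)
        qed
      qed
    qed
  qed
qed



fun offd :: "('a \<Rightarrow> 'a \<Rightarrow> int) \<Rightarrow> 'a list \<Rightarrow> int" where
  "offd Q (x # y # ys) = Q x y + offd Q (y # ys)"
| "offd Q _ = 0"

definition lastt :: "('a \<Rightarrow> int) \<Rightarrow> 'a list \<Rightarrow> int" where
  "lastt h w = (if w = [] then 0 else h (last w))"

lemma wtn_ident:
  "int (wtn \<psi> P w) = sum_list (map (\<lambda>x. int (gA \<psi> x) + int (pA \<psi> P x x)) w)
     + offd (\<lambda>x y. int (pA \<psi> P x y) - int (pA \<psi> P x x)) w - lastt (\<lambda>x. int (pA \<psi> P x x)) w"
  by (induction \<psi> P w rule: wtn.induct) (auto simp: lastt_def)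

lemma lsum_cnt1:
  assumes "finite A"
  shows "w \<in> lists A \<Longrightarrow> sum_list (map f w) = (\<Sum>a\<in>A. f a * int (cnt1 a w))"
proof (induction w)
  case Nil then show ?case by simp
next
  case (Cons x w)
  have "(\<Sum>a\<in>A. f a * int (cnt1 a (x # w))) = (\<Sum>a\<in>A. (if x = a then f a else 0) + f a * int (cnt1 a w))"
    by (rule sum.cong) (auto simp: algebra_simps)
  also have "\<dots> = (\<Sum>a\<in>A. (if x = a then f a else 0)) + (\<Sum>a\<in>A. f a * int (cnt1 a w))"
    by (rule sum.distrib)
  also have "(\<Sum>a\<in>A. (if x = a then f a else 0)) = f x" using Cons.prems assms by (simp add: sum.delta)
  finally show ?case using Cons by simp
qed

lemma offd_cnt2:
  assumes "finite A"
  shows "(\<And>x. Q x x = 0) \<Longrightarrow> w \<in> lists A \<Longrightarrow> offd Q w = (\<Sum>p\<in>{p \<in> A \<times> A. fst p \<noteq> snd p}. Q (fst p) (snd p) * int (cnt2 (fst p) (snd p) w))"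
proof (induction Q w rule: offd.induct)
  case (1 Q' x y ys)
  let ?S = "{p \<in> A \<times> A. fst p \<noteq> snd p}"
  have fin: "finite ?S" using assms(1) by simp
  have "(\<Sum>p\<in>?S. Q' (fst p) (snd p) * int (cnt2 (fst p) (snd p) (x # y # ys)))
      = (\<Sum>p\<in>?S. (if p = (x, y) then Q' x y else 0) + Q' (fst p) (snd p) * int (cnt2 (fst p) (snd p) (y # ys)))"
    by (rule sum.cong) (auto simp: algebra_simps)
  also have "\<dots> = (\<Sum>p\<in>?S. (if p = (x, y) then Q' x y else 0)) + (\<Sum>p\<in>?S. Q' (fst p) (snd p) * int (cnt2 (fst p) (snd p) (y # ys)))"
    by (rule sum.distrib)
  also have "(\<Sum>p\<in>?S. (if p = (x, y) then Q' x y else 0)) = (if (x, y) \<in> ?S then Q' x y else 0)"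
    using fin by (simp add: sum.delta')
  also have "(if (x, y) \<in> ?S then Q' x y else 0) = Q' x y" using "1.prems" by auto
  finally show ?case using "1.IH" "1.prems" by simp
qed auto

lemma mem_last: "w \<in> lists A \<Longrightarrow> w \<in> cc (lists A) {[x]} \<longleftrightarrow> w \<noteq> [] \<and> last w = x"
proof
  assume "w \<in> cc (lists A) {[x]}" then show "w \<noteq> [] \<and> last w = x" unfolding cc_def by auto
next
  assume h: "w \<in> lists A" "w \<noteq> [] \<and> last w = x"
  then have "w = butlast w @ [x]" by (metis append_butlast_last_id)
  moreover have "butlast w \<in> lists A" using h(1) by (auto dest: in_set_butlastD)
  ultimately show "w \<in> cc (lists A) {[x]}" unfolding cc_def by blast
qed

lemma lastt_sum:
  assumes "finite A" "w \<in> lists A"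
  shows "lastt h w = (\<Sum>x\<in>A. h x * (if w \<in> cc (lists A) {[x]} then 1 else 0))"
proof (cases "w = []")
  case True
  have "(\<Sum>x\<in>A. h x * (if w \<in> cc (lists A) {[x]} then 1 else 0)) = (\<Sum>x\<in>A. 0)"
  proof (rule sum.cong)
    fix x assume "x \<in> A"
    have "w \<notin> cc (lists A) {[x]}" using mem_last[OF assms(2), of x] True by blast
    then show "h x * (if w \<in> cc (lists A) {[x]} then 1 else 0) = 0" by simp
  qed simp
  then show ?thesis using True by (simp add: lastt_def)
next
  case False
  then have "last w \<in> set w" by simp
  then have la: "last w \<in> A" using assms(2) by blast
  have "(\<Sum>x\<in>A. h x * (if w \<in> cc (lists A) {[x]} then 1 else 0)) = (\<Sum>x\<in>A. if last w = x then h x else 0)"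
  proof (rule sum.cong)
    fix x assume "x \<in> A"
    have "w \<in> cc (lists A) {[x]} \<longleftrightarrow> last w = x" using mem_last[OF assms(2), of x] False by blast
    then show "h x * (if w \<in> cc (lists A) {[x]} then 1 else 0) = (if last w = x then h x else 0)" by simp
  qed simp
  also have "\<dots> = h (last w)" using assms(1) la by (simp only: sum.delta' if_True)
  finally show ?thesis using False by (simp add: lastt_def)
qed

lemma good_wtn:
  assumes fin: "finite A" and n: "n \<ge> 1"
  shows "good A n (\<lambda>w. int (wtn \<psi> P w))"
proof -
  define G' where "G' = (\<lambda>x. int (gA \<psi> x) + int (pA \<psi> P x x))"
  define Q where "Q = (\<lambda>x y. int (pA \<psi> P x y) - int (pA \<psi> P x x))"
  define h where "h = (\<lambda>x. int (pA \<psi> P x x))"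
  let ?S = "{p \<in> A \<times> A. fst p \<noteq> snd p}"
  have g1: "good A n (\<lambda>w. \<Sum>a\<in>A. G' a * int (cnt1 a w))"
  proof (rule good_sum[OF n fin])
    fix a assume "a \<in> A"
    then show "good A n (\<lambda>w. G' a * int (cnt1 a w))" by (rule good_scale[OF n good_cnt1[OF _ n]])
  qed
  have g2: "good A n (\<lambda>w. \<Sum>p\<in>?S. Q (fst p) (snd p) * int (cnt2 (fst p) (snd p) w))"
  proof (rule good_sum[OF n])
    show "finite ?S" by (rule finite_subset[of _ "A \<times> A"]) (use fin in auto)
  next
    fix p assume p: "p \<in> ?S"
    then have "fst p \<in> A" "snd p \<in> A" "fst p \<noteq> snd p" by auto
    then show "good A n (\<lambda>w. Q (fst p) (snd p) * int (cnt2 (fst p) (snd p) w))"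
      by (intro good_scale[OF n] good_cnt2[OF _ _ _ n])
  qed
  have g3: "good A n (\<lambda>w. (-1) * (\<Sum>x\<in>A. h x * (if w \<in> cc (lists A) {[x]} then 1 else 0)))"
  proof (rule good_scale[OF n], rule good_sum[OF n fin])
    fix x assume x: "x \<in> A"
    have "shk A 1 (cc (lists A) {[x]})" using x by (intro shk_cc shk_lists shk_letter)
    then have "good A n (\<lambda>w. if w \<in> cc (lists A) {[x]} then 1 else 0)" by (rule good_ind)
    then show "good A n (\<lambda>w. h x * (if w \<in> cc (lists A) {[x]} then 1 else 0))" by (rule good_scale[OF n])
  qed
  have g: "good A n (\<lambda>w. (\<Sum>a\<in>A. G' a * int (cnt1 a w))
     + (\<Sum>p\<in>?S. Q (fst p) (snd p) * int (cnt2 (fst p) (snd p) w))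
     + (-1) * (\<Sum>x\<in>A. h x * (if w \<in> cc (lists A) {[x]} then 1 else 0)))"
    using good_add[OF n good_add[OF n g1 g2] g3] by simp
  show ?thesis
  proof (rule good_cong[OF _ g])
    fix w assume w: "w \<in> lists A"
    have Qd: "\<And>x. Q x x = 0" by (simp add: Q_def)
    show "(\<Sum>a\<in>A. G' a * int (cnt1 a w))
     + (\<Sum>p\<in>?S. Q (fst p) (snd p) * int (cnt2 (fst p) (snd p) w))
     + (-1) * (\<Sum>x\<in>A. h x * (if w \<in> cc (lists A) {[x]} then 1 else 0)) = int (wtn \<psi> P w)"
    proof -
      have e1: "(\<Sum>a\<in>A. G' a * int (cnt1 a w)) = sum_list (map G' w)" using lsum_cnt1[OF fin w] by simp
      have e2: "(\<Sum>p\<in>?S. Q (fst p) (snd p) * int (cnt2 (fst p) (snd p) w)) = offd Q w"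
        using offd_cnt2[OF fin, of Q w] Qd w by simp
      have e3: "(\<Sum>x\<in>A. h x * (if w \<in> cc (lists A) {[x]} then 1 else 0)) = lastt h w"
        using lastt_sum[OF fin w] by simp
      have e4: "int (wtn \<psi> P w) = sum_list (map G' w) + offd Q w - lastt h w"
        unfolding G'_def Q_def h_def by (rule wtn_ident)
      show ?thesis unfolding e1 e2 e3 e4 by simp
    qed
  qed
qed



lemma cons_eq_split:
  "(x # y # ys = u @ [a, b] @ v) \<longleftrightarrow> (u = [] \<and> a = x \<and> b = y \<and> v = ys) \<or> (\<exists>u'. u = x # u' \<and> y # ys = u' @ [a, b] @ v)"
  by (cases u) auto

lemma adm_char:
  "w \<noteq> [] \<Longrightarrow> adm \<psi> P w \<longleftrightarrow> (\<forall>x\<in>set w. \<psi> [x] \<noteq> None) \<and>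
     \<not> (\<exists>u x y v. w = u @ [x, y] @ v \<and> P (lA \<psi> x) (iA \<psi> y) = None)"
proof (induction \<psi> P w rule: adm.induct)
  case (1 \<psi> P) then show ?case by simp
next
  case (2 \<psi> P x)
  have "\<not> (\<exists>u a b v. [x] = u @ [a, b] @ v)"
  proof
    assume "\<exists>u a b v. [x] = u @ [a, b] @ v"
    then obtain u a b v where "[x] = u @ [a, b] @ v" by blast
    then have "length [x] = length (u @ [a, b] @ v)" by simp
    then show False by simp
  qed
  then show ?case by auto
next
  case (3 \<psi> P x y ys)
  have IH: "adm \<psi> P (y # ys) \<longleftrightarrow> (\<forall>z\<in>set (y # ys). \<psi> [z] \<noteq> None) \<and>
     \<not> (\<exists>u a b v. y # ys = u @ [a, b] @ v \<and> P (lA \<psi> a) (iA \<psi> b) = None)" using 3 by simp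
  have B: "(\<exists>u a b v. x # y # ys = u @ [a, b] @ v \<and> P (lA \<psi> a) (iA \<psi> b) = None) \<longleftrightarrow>
    P (lA \<psi> x) (iA \<psi> y) = None \<or> (\<exists>u a b v. y # ys = u @ [a, b] @ v \<and> P (lA \<psi> a) (iA \<psi> b) = None)"
  proof
    assume "\<exists>u a b v. x # y # ys = u @ [a, b] @ v \<and> P (lA \<psi> a) (iA \<psi> b) = None"
    then obtain u a b v where h: "x # y # ys = u @ [a, b] @ v" "P (lA \<psi> a) (iA \<psi> b) = None" by blast
    from h(1)[unfolded cons_eq_split]
    show "P (lA \<psi> x) (iA \<psi> y) = None \<or> (\<exists>u a b v. y # ys = u @ [a, b] @ v \<and> P (lA \<psi> a) (iA \<psi> b) = None)"
      using h(2) by blast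
  next
    assume "P (lA \<psi> x) (iA \<psi> y) = None \<or> (\<exists>u a b v. y # ys = u @ [a, b] @ v \<and> P (lA \<psi> a) (iA \<psi> b) = None)"
    then show "\<exists>u a b v. x # y # ys = u @ [a, b] @ v \<and> P (lA \<psi> a) (iA \<psi> b) = None"
    proof
      assume "P (lA \<psi> x) (iA \<psi> y) = None"
      then show ?thesis by (intro exI[of _ "[]"] exI[of _ x] exI[of _ y] exI[of _ ys]) simp
    next
      assume "\<exists>u a b v. y # ys = u @ [a, b] @ v \<and> P (lA \<psi> a) (iA \<psi> b) = None"
      then obtain u a b v where "y # ys = u @ [a, b] @ v" "P (lA \<psi> a) (iA \<psi> b) = None" by blast
      then show ?thesis by (intro exI[of _ "x # u"] exI[of _ a] exI[of _ b] exI[of _ v]) simp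
    qed
  qed
  show ?case unfolding adm.simps(3) IH B by auto
qed

lemma mem_hd: "w \<in> cc {[x]} (lists A) \<longleftrightarrow> w \<noteq> [] \<and> hd w = x \<and> tl w \<in> lists A"
proof
  assume "w \<in> cc {[x]} (lists A)" then show "w \<noteq> [] \<and> hd w = x \<and> tl w \<in> lists A" unfolding cc_def by auto
next
  assume h: "w \<noteq> [] \<and> hd w = x \<and> tl w \<in> lists A"
  then have "w = [x] @ tl w" by (cases w) auto
  then show "w \<in> cc {[x]} (lists A)" using h unfolding cc_def by blast
qed

lemma adm_set:
  "{w \<in> lists A. adm \<psi> P w} = (lists A - {[]})
     - (\<Union>x\<in>{x \<in> A. \<psi> [x] = None}. cc (cc (lists A) {[x]}) (lists A))
     - (\<Union>p\<in>{p \<in> A \<times> A. P (lA \<psi> (fst p)) (iA \<psi> (snd p)) = None}. cc (cc (lists A) {[fst p, snd p]}) (lists A))"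
  (is "?L = ?R")
proof (rule set_eqI)
  fix w
  show "w \<in> ?L \<longleftrightarrow> w \<in> ?R"
  proof (cases "w \<in> lists A \<and> w \<noteq> []")
    case False
    then have "w \<notin> ?L" by (cases w) auto
    moreover have "w \<notin> ?R" using False by auto
    ultimately show ?thesis by blast
  next
    case True
    then have wA: "w \<in> lists A" and ne: "w \<noteq> []" by auto
    have c1: "(\<exists>x\<in>set w. \<psi> [x] = None) \<longleftrightarrow> w \<in> (\<Union>x\<in>{x \<in> A. \<psi> [x] = None}. cc (cc (lists A) {[x]}) (lists A))"
    proof
      assume "\<exists>x\<in>set w. \<psi> [x] = None"
      then obtain x where x: "x \<in> set w" "\<psi> [x] = None" by blast
      then obtain u v where uv: "w = u @ x # v" by (metis split_list)
      have "u \<in> lists A" "v \<in> lists A" "x \<in> A" using uv wA by auto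
      then have "w \<in> cc (cc (lists A) {[x]}) (lists A)" unfolding mem_cc3 using uv by auto
      then show "w \<in> (\<Union>x\<in>{x \<in> A. \<psi> [x] = None}. cc (cc (lists A) {[x]}) (lists A))"
        using x \<open>x \<in> A\<close> by blast
    next
      assume "w \<in> (\<Union>x\<in>{x \<in> A. \<psi> [x] = None}. cc (cc (lists A) {[x]}) (lists A))"
      then obtain x where x: "\<psi> [x] = None" "w \<in> cc (cc (lists A) {[x]}) (lists A)" by blast
      then show "\<exists>x\<in>set w. \<psi> [x] = None" unfolding mem_cc3 by auto
    qed
    have c2: "(\<exists>u x y v. w = u @ [x, y] @ v \<and> P (lA \<psi> x) (iA \<psi> y) = None) \<longleftrightarrow>
      w \<in> (\<Union>p\<in>{p \<in> A \<times> A. P (lA \<psi> (fst p)) (iA \<psi> (snd p)) = None}. cc (cc (lists A) {[fst p, snd p]}) (lists A))"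
    proof
      assume "\<exists>u x y v. w = u @ [x, y] @ v \<and> P (lA \<psi> x) (iA \<psi> y) = None"
      then obtain u x y v where uv: "w = u @ [x, y] @ v" "P (lA \<psi> x) (iA \<psi> y) = None" by blast
      have "u \<in> lists A" "v \<in> lists A" "x \<in> A" "y \<in> A" using uv wA by auto
      then have "w \<in> cc (cc (lists A) {[fst (x, y), snd (x, y)]}) (lists A)" unfolding mem_cc3 using uv by auto
      moreover have "(x, y) \<in> {p \<in> A \<times> A. P (lA \<psi> (fst p)) (iA \<psi> (snd p)) = None}"
        using uv \<open>x \<in> A\<close> \<open>y \<in> A\<close> by simp
      ultimately show "w \<in> (\<Union>p\<in>{p \<in> A \<times> A. P (lA \<psi> (fst p)) (iA \<psi> (snd p)) = None}. cc (cc (lists A) {[fst p, snd p]}) (lists A))"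
        by blast
    next
      assume "w \<in> (\<Union>p\<in>{p \<in> A \<times> A. P (lA \<psi> (fst p)) (iA \<psi> (snd p)) = None}. cc (cc (lists A) {[fst p, snd p]}) (lists A))"
      then obtain p where p: "P (lA \<psi> (fst p)) (iA \<psi> (snd p)) = None" "w \<in> cc (cc (lists A) {[fst p, snd p]}) (lists A)" by blast
      then show "\<exists>u x y v. w = u @ [x, y] @ v \<and> P (lA \<psi> x) (iA \<psi> y) = None" unfolding mem_cc3 by blast
    qed
    have "w \<in> ?L \<longleftrightarrow> adm \<psi> P w" using wA by simp
    also have "\<dots> \<longleftrightarrow> \<not> (\<exists>x\<in>set w. \<psi> [x] = None) \<and> \<not> (\<exists>u x y v. w = u @ [x, y] @ v \<and> P (lA \<psi> x) (iA \<psi> y) = None)"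
      using adm_char[OF ne, of \<psi> P] by auto
    also have "\<dots> \<longleftrightarrow> w \<in> ?R" unfolding c1 c2 using wA ne by blast
    finally show ?thesis .
  qed
qed



theorem theorem3p3:
  fixes n :: nat and I :: "'i set" and \<Lambda> :: "'l set"
    and P :: "'l \<Rightarrow> 'i \<Rightarrow> nat option"
    and A :: "'a set" and L :: "'a list set"
  assumes "n \<ge> 1" and "I \<noteq> {}" and "\<Lambda> \<noteq> {}"
    and "valid_sandwich n I \<Lambda> P"
    and "finite A"
    and "L \<subseteq> plus_words A"
    and "recognised_by A (rees0_carrier n I \<Lambda>) (rees0_mult n P) L"
  shows "gen_star_height_le A L 1"
proof -
  note n = assms(1) and fin = assms(5)
  obtain \<psi> :: "'a list \<Rightarrow> ('i, 'l) rees0" and X where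
    S: "\<forall>w\<in>plus_words A. \<psi> w \<in> rees0_carrier n I \<Lambda>" and
    M: "\<forall>u\<in>plus_words A. \<forall>v\<in>plus_words A. \<psi> (u @ v) = rees0_mult n P (\<psi> u) (\<psi> v)" and
    LX: "L = {w \<in> plus_words A. \<psi> w \<in> X}"
    using assms(7) unfolding recognised_by_def by blast
  have S': "\<And>w. w \<in> plus_words A \<Longrightarrow> \<psi> w \<in> rees0_carrier n I \<Lambda>" using S by blast
  have M': "\<And>u v. u \<in> plus_words A \<Longrightarrow> v \<in> plus_words A \<Longrightarrow> \<psi> (u @ v) = rees0_mult n P (\<psi> u) (\<psi> v)"
    using M by blast
  have char: "\<And>w. w \<in> plus_words A \<Longrightarrow> \<psi> w = (if adm \<psi> P w then Some (iA \<psi> (hd w), wtn \<psi> P w mod n, lA \<psi> (last w)) else None)"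
    by (rule psi_char[of A \<psi> n I \<Lambda> P]) (use S' M' in blast)+
  define ADM where "ADM = {w \<in> lists A. adm \<psi> P w}"
  have shADM: "shk A 1 ADM"
    unfolding ADM_def adm_set
  proof (intro shk_diff shk_plus)
    have "finite {x \<in> A. \<psi> [x] = None}" using fin by simp
    then show "shk A 1 (\<Union>x\<in>{x \<in> A. \<psi> [x] = None}. cc (cc (lists A) {[x]}) (lists A))"
      by (rule shk_UN) (intro shk_cc shk_lists shk_letter, simp)
  next
    have "finite {p \<in> A \<times> A. P (lA \<psi> (fst p)) (iA \<psi> (snd p)) = None}"
      by (rule finite_subset[of _ "A \<times> A"]) (use fin in auto)
    then show "shk A 1 (\<Union>p\<in>{p \<in> A \<times> A. P (lA \<psi> (fst p)) (iA \<psi> (snd p)) = None}. cc (cc (lists A) {[fst p, snd p]}) (lists A))"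
      by (rule shk_UN) (intro shk_cc shk_lists shk_pair, auto)
  qed (rule shk_lists shk_eps)+
  define W where "W r = {w \<in> lists A. int (wtn \<psi> P w) mod int n = int r}" for r
  have shW: "shk A 1 (W r)" for r using good_wtn[OF fin n, of \<psi> P] unfolding good_def W_def by blast
  define N where "N t = ADM \<inter> cc {[fst t]} (lists A) \<inter> cc (lists A) {[fst (snd t)]} \<inter> W (snd (snd t))" for t
  define T where "T = {t \<in> A \<times> A \<times> {..<n}. Some (iA \<psi> (fst t), snd (snd t), lA \<psi> (fst (snd t))) \<in> X}"
  have shN: "shk A 1 (N t)" if "t \<in> T" for t
  proof -
    have "fst t \<in> A" "fst (snd t) \<in> A" using that unfolding T_def by auto
    then show ?thesis unfolding N_def
      by (intro shk_inter shADM shW shk_cc shk_letter shk_lists)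
  qed
  have finT: "finite T"
    by (rule finite_subset[of _ "A \<times> A \<times> {..<n}"]) (use fin in \<open>auto simp: T_def\<close>)
  define R where "R = (if None \<in> X then (lists A - {[]}) - ADM else {}) \<union> (\<Union>t\<in>T. N t)"
  have shR: "shk A 1 R" unfolding R_def
    using shN finT shADM by (intro shk_union shk_UN) (auto simp: shk_empty shk_diff shk_plus)
  have eq: "L = R"
  proof (rule set_eqI)
    fix w
    show "w \<in> L \<longleftrightarrow> w \<in> R"
    proof (cases "w \<in> plus_words A")
      case False
      then have "w \<notin> L" using LX by simp
      moreover have "w \<notin> R"
      proof
        assume "w \<in> R"
        then have "w \<in> lists A - {[]}" unfolding R_def N_def ADM_def
          by (auto split: if_splits)
        then show False using False by (simp add: plus_words_def)
      qed
      ultimately show ?thesis by blast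
    next
      case True
      then have wA: "w \<in> lists A" and ne: "w \<noteq> []" by (auto simp: plus_words_def)
      show ?thesis
      proof (cases "adm \<psi> P w")
        case False
        have "\<psi> w = None" using char[OF True] False by simp
        moreover have "w \<notin> N t" for t using False unfolding N_def ADM_def by auto
        ultimately show ?thesis using LX True False wA ne unfolding R_def ADM_def by auto
      next
        case adm: True
        have psw: "\<psi> w = Some (iA \<psi> (hd w), wtn \<psi> P w mod n, lA \<psi> (last w))" using char[OF True] adm by simp
        have inN: "w \<in> N t \<longleftrightarrow> t = (hd w, last w, wtn \<psi> P w mod n)" if "snd (snd t) < n" for t
        proof -
          obtain x y r where t: "t = (x, y, r)" by (cases t) auto
          have r: "r < n" using that t by simp
          have "int (wtn \<psi> P w) mod int n = int r \<longleftrightarrow> wtn \<psi> P w mod n = r"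
            using r by (metis of_nat_eq_iff of_nat_mod mod_less)
          moreover have h1: "w \<in> cc {[x]} (lists A) \<longleftrightarrow> hd w = x"
            using mem_hd[of w x A] wA ne by (cases w) auto
          moreover have h2: "w \<in> cc (lists A) {[y]} \<longleftrightarrow> last w = y"
            using mem_last[OF wA, of y] ne by auto
          ultimately show ?thesis unfolding N_def ADM_def W_def t
            using wA adm ne by auto
        qed
        have "w \<in> L \<longleftrightarrow> \<psi> w \<in> X" using LX True by simp
        also have "\<dots> \<longleftrightarrow> (hd w, last w, wtn \<psi> P w mod n) \<in> T"
          unfolding psw T_def using wA ne n by auto
        also have "\<dots> \<longleftrightarrow> (\<exists>t\<in>T. w \<in> N t)"
        proof
          assume "(hd w, last w, wtn \<psi> P w mod n) \<in> T"
          moreover have "w \<in> N (hd w, last w, wtn \<psi> P w mod n)" using inN[of "(hd w, last w, wtn \<psi> P w mod n)"] n by simp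
          ultimately show "\<exists>t\<in>T. w \<in> N t" by blast
        next
          assume "\<exists>t\<in>T. w \<in> N t"
          then obtain t where "t \<in> T" "w \<in> N t" by blast
          moreover have "snd (snd t) < n" using \<open>t \<in> T\<close> unfolding T_def by auto
          ultimately show "(hd w, last w, wtn \<psi> P w mod n) \<in> T" using inN by auto
        qed
        also have "\<dots> \<longleftrightarrow> w \<in> R" unfolding R_def ADM_def using adm wA by auto
        finally show ?thesis .
      qed
    qed
  qed
  show ?thesis using shR unfolding eq gen_star_height_le_def shk_def .
qed


end
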